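(* Let $n\ge0$ and $k\ge1$ be integers, let $n=n_1+\dots+n_k$ with integers $n_i\ge0$, and let $m\ge n+k-1$. Then \[ \binom{m}{n}=\sum_{j=0}^{k-1}(-1)^j\binom{k-1}{j}\sum_{\substack{m_1+\dots+m_k=m-j\\ m_i\ge n_i}}\ \prod_{i=1}^{k}\binom{m_i}{n_i}. \] *)

theory Defs
  imports Main "HOL-Library.FuncSet"
begin

end

theory Submission imports Defs "HOL-Library.FuncSet" begin

definition SS :: "'a set \<Rightarrow> nat \<Rightarrow> ('a \<Rightarrow> nat) set" where
  "SS I M = {ms \<in> I \<rightarrow>\<^sub>E UNIV. sum ms I = M}"

lemma SS_finite: "finite I \<Longrightarrow> finite (SS I M)"
proof -
  assume "finite I"
  have "SS I M \<subseteq> I \<rightarrow>\<^sub>E {..M}"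
  proof
    fix ms assume "ms \<in> SS I M"
    then have "ms \<in> I \<rightarrow>\<^sub>E UNIV" "sum ms I = M" by (auto simp: SS_def)
    moreover have "\<forall>i\<in>I. ms i \<le> sum ms I"
      using \<open>finite I\<close> by (auto intro: member_le_sum)
    ultimately show "ms \<in> I \<rightarrow>\<^sub>E {..M}" by (auto simp: PiE_iff)
  qed
  moreover have "finite (I \<rightarrow>\<^sub>E {..M})" using \<open>finite I\<close> by (simp add: finite_PiE)
  ultimately show ?thesis by (rule finite_subset)
qed

lemma SS_decomp:
  assumes "finite I" "a \<notin> I"
  shows "sum f (SS (insert a I) M) = (\<Sum>t\<le>M. \<Sum>g\<in>SS I (M-t). f (g(a:=t)))"
proof -
  let ?h = "\<lambda>(t,g). g(a:=t)"
  have bij: "bij_betw ?h (SIGMA t:{..M}. SS I (M-t)) (SS (insert a I) M)"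
  proof (rule bij_betwI[where g="\<lambda>ms. (ms a, ms(a:=undefined))"])
    show "?h \<in> (SIGMA t:{..M}. SS I (M-t)) \<rightarrow> SS (insert a I) M"
    proof
      fix x assume "x \<in> (SIGMA t:{..M}. SS I (M-t))"
      then obtain t g where x: "x = (t,g)" "t \<le> M" "g \<in> I \<rightarrow>\<^sub>E UNIV" "sum g I = M - t"
        by (auto simp: SS_def)
      have "sum (g(a:=t)) I = sum g I" using assms by (intro sum.cong) auto
      then show "?h x \<in> SS (insert a I) M" using x assms
        by (auto simp: SS_def PiE_iff extensional_def)
    qed
    show "(\<lambda>ms. (ms a, ms(a:=undefined))) \<in> SS (insert a I) M \<rightarrow> (SIGMA t:{..M}. SS I (M-t))"
    proof
      fix ms assume "ms \<in> SS (insert a I) M"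
      then have ms: "ms \<in> insert a I \<rightarrow>\<^sub>E UNIV" "sum ms (insert a I) = M" by (auto simp: SS_def)
      have "sum (ms(a:=undefined)) I = sum ms I" using assms by (intro sum.cong) auto
      then show "(ms a, ms(a:=undefined)) \<in> (SIGMA t:{..M}. SS I (M-t))"
        using ms assms by (auto simp: SS_def PiE_iff extensional_def)
    qed
    show "(\<lambda>ms. (ms a, ms(a:=undefined))) (?h x) = x" if xin: "x \<in> (SIGMA t:{..M}. SS I (M-t))" for x
    proof -
      obtain t g where x: "x = (t,g)" "g \<in> I \<rightarrow>\<^sub>E UNIV"
        using xin unfolding SS_def by (cases x) auto
      then have "g a = undefined" using assms by (auto simp: PiE_iff extensional_def)
      then show ?thesis using x by auto
    qed
    show "?h ((\<lambda>ms. (ms a, ms(a:=undefined))) y) = y" if "y \<in> SS (insert a I) M" for y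
      by auto
  qed
  have "sum f (SS (insert a I) M) = sum (f \<circ> ?h) (SIGMA t:{..M}. SS I (M-t))"
    using sum.reindex_bij_betw[OF bij, of f] by simp
  also have "\<dots> = (\<Sum>t\<le>M. \<Sum>g\<in>SS I (M-t). f (g(a:=t)))"
    using sum.Sigma[of "{..M}" "\<lambda>t. SS I (M-t)" "\<lambda>t g. f (g(a:=t))", symmetric]
    by (simp add: SS_finite assms case_prod_unfold comp_def)
  finally show ?thesis .
qed

lemma SS_single: "SS {a} M = {(\<lambda>_. undefined)(a:=M)}"
  by (auto simp: SS_def PiE_iff extensional_def fun_eq_iff)

lemma upper_vdm:
  "(\<Sum>t\<le>a. ((a-t) choose b) * (t choose c)) = Suc a choose (b+c+1)"
proof (induction a arbitrary: b)
  case 0 then show ?case by (cases b; cases c) auto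
next
  case (Suc a)
  show ?case
  proof (cases b)
    case 0
    have "(\<Sum>t\<le>Suc a. ((Suc a-t) choose b) * (t choose c)) = (\<Sum>t\<le>Suc a. t choose c)"
      using 0 by simp
    also have "\<dots> = Suc (Suc a) choose Suc c" by (rule sum_choose_upper)
    finally show ?thesis using 0 by simp
  next
    case (Suc b')
    have "(\<Sum>t\<le>Suc a. ((Suc a-t) choose b) * (t choose c))
        = (\<Sum>t\<le>a. ((Suc a-t) choose b) * (t choose c))"
      using Suc by (simp add: sum.atMost_Suc)
    also have "\<dots> = (\<Sum>t\<le>a. ((a-t) choose b') * (t choose c) + ((a-t) choose b) * (t choose c))"
      by (rule sum.cong) (auto simp: Suc Suc_diff_le algebra_simps)
    also have "\<dots> = (Suc a choose (b'+c+1)) + (Suc a choose (b+c+1))"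
      by (simp add: sum.distrib Suc.IH)
    also have "\<dots> = Suc (Suc a) choose (b+c+1)" using Suc by simp
    finally show ?thesis .
  qed
qed

lemma alt_sum:
  "(\<Sum>j=0..K. (-1::int)^j * int (K choose j) * int ((m + K - j) choose (n + K))) = int (m choose n)"
proof (induction K arbitrary: m n)
  case 0 then show ?case by simp
next
  case (Suc K)
  have split: "(\<Sum>j=0..Suc K. (-1::int)^j * int (Suc K choose j) * int ((m + Suc K - j) choose (n + Suc K)))
     = (\<Sum>j=0..K. (-1::int)^j * int (K choose j) * int ((Suc m + K - j) choose (Suc n + K)))
     + (\<Sum>j=0..Suc K. (-1::int)^j * int (if j = 0 then 0 else K choose (j - 1)) * int ((m + Suc K - j) choose (n + Suc K)))"
  proof -
    have a: "(\<Sum>j=0..Suc K. (-1::int)^j * int (Suc K choose j) * int ((m + Suc K - j) choose (n + Suc K)))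
      = (\<Sum>j=0..Suc K. (-1::int)^j * int (K choose j) * int ((m + Suc K - j) choose (n + Suc K)))
      + (\<Sum>j=0..Suc K. (-1::int)^j * int (if j = 0 then 0 else K choose (j - 1)) * int ((m + Suc K - j) choose (n + Suc K)))"
      apply (subst sum.distrib[symmetric], rule sum.cong, simp)
      subgoal for j by (cases j) (auto simp: algebra_simps)
      done
    have b: "(\<Sum>j=0..Suc K. (-1::int)^j * int (K choose j) * int ((m + Suc K - j) choose (n + Suc K)))
       = (\<Sum>j=0..K. (-1::int)^j * int (K choose j) * int ((Suc m + K - j) choose (Suc n + K)))"
      by (simp add: sum.atLeast0_atMost_Suc)
    show ?thesis using a b by simp
  qed
  have c: "(\<Sum>j=0..Suc K. (-1::int)^j * int (if j = 0 then 0 else K choose (j - 1)) * int ((m + Suc K - j) choose (n + Suc K)))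
     = - (\<Sum>j=0..K. (-1::int)^j * int (K choose j) * int ((m + K - j) choose (Suc n + K)))"
    by (subst sum.atLeast0_atMost_Suc_shift) (simp add: sum_negf)
  show ?case unfolding split c Suc.IH by simp
qed

lemma SS_binom:
  assumes "finite I" "I \<noteq> {}"
  shows "(\<Sum>ms\<in>SS I M. \<Prod>i\<in>I. ms i choose nn i) = (M + card I - 1) choose (sum nn I + card I - 1)"
  using assms
proof (induction I arbitrary: M rule: finite_ne_induct)
  case (singleton a) then show ?case by (simp add: SS_single)
next
  case (insert a F)
  define c where "c = card F"
  define N where "N = sum nn F"
  have c1: "c \<ge> 1" using insert c_def by (simp add: Suc_leI card_gt_0_iff)
  have "(\<Sum>ms\<in>SS (insert a F) M. \<Prod>i\<in>insert a F. ms i choose nn i)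
     = (\<Sum>t\<le>M. \<Sum>g\<in>SS F (M-t). \<Prod>i\<in>insert a F. (g(a:=t)) i choose nn i)"
    by (rule SS_decomp[OF insert(1,3)])
  also have "\<dots> = (\<Sum>t\<le>M. (t choose nn a) * (\<Sum>g\<in>SS F (M-t). \<Prod>i\<in>F. g i choose nn i))"
  proof (rule sum.cong[OF refl])
    fix t
    have "(\<Prod>i\<in>insert a F. (g(a:=t)) i choose nn i) = (t choose nn a) * (\<Prod>i\<in>F. g i choose nn i)" for g
    proof -
      have e: "(\<Prod>i\<in>F. (g(a:=t)) i choose nn i) = (\<Prod>i\<in>F. g i choose nn i)"
        by (rule prod.cong) (use insert(3) in auto)
      show ?thesis using insert(1,3) by (simp add: prod.insert e del: fun_upd_apply) simp
    qed
    then show "(\<Sum>g\<in>SS F (M-t). \<Prod>i\<in>insert a F. (g(a:=t)) i choose nn i)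
       = (t choose nn a) * (\<Sum>g\<in>SS F (M-t). \<Prod>i\<in>F. g i choose nn i)"
      by (simp add: sum_distrib_left)
  qed
  also have "\<dots> = (\<Sum>t\<le>M. (((M + c - 1) - t) choose (N + c - 1)) * (t choose nn a))"
    using insert.IH by (intro sum.cong) (auto simp: c_def N_def)
  also have "\<dots> = (\<Sum>t\<le>M + c - 1. (((M + c - 1) - t) choose (N + c - 1)) * (t choose nn a))"
    by (rule sum.mono_neutral_left) (use c1 in auto)
  also have "\<dots> = Suc (M + c - 1) choose (N + c - 1 + nn a + 1)" by (rule upper_vdm)
  also have "\<dots> = (M + card (insert a F) - 1) choose (sum nn (insert a F) + card (insert a F) - 1)"
    using insert(1,3) c1 by (simp add: c_def N_def algebra_simps)
  finally show ?case .
qed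

theorem proposition4p2:
  fixes n k m :: nat and nn :: "nat \<Rightarrow> nat"
  assumes "k \<ge> 1"
    and "n = (\<Sum>i=1..k. nn i)"
    and "m \<ge> n + k - 1"
  shows "int (m choose n) =
    (\<Sum>j=0..k-1. (-1)^j * int ((k-1) choose j) *
       (\<Sum>ms \<in> {ms \<in> {1..k} \<rightarrow>\<^sub>E UNIV.
                    (\<Sum>i=1..k. ms i) = m - j \<and> (\<forall>i\<in>{1..k}. nn i \<le> ms i)}.
          int (\<Prod>i=1..k. (ms i choose nn i))))"
proof -
  have inner: "(\<Sum>ms \<in> {ms \<in> {1..k} \<rightarrow>\<^sub>E UNIV.
                    (\<Sum>i=1..k. ms i) = m - j \<and> (\<forall>i\<in>{1..k}. nn i \<le> ms i)}.
          int (\<Prod>i=1..k. (ms i choose nn i))) = int (((m + (k-1) - j)) choose (n + (k-1)))"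
    if j: "j \<le> k - 1" for j
  proof -
    have "(\<Sum>ms \<in> {ms \<in> {1..k} \<rightarrow>\<^sub>E UNIV.
                    (\<Sum>i=1..k. ms i) = m - j \<and> (\<forall>i\<in>{1..k}. nn i \<le> ms i)}.
          int (\<Prod>i=1..k. (ms i choose nn i)))
       = (\<Sum>ms \<in> SS {1..k} (m-j). int (\<Prod>i=1..k. (ms i choose nn i)))"
    proof (rule sum.mono_neutral_left)
      show "finite (SS {1..k} (m - j))" by (simp add: SS_finite)
      show "{ms \<in> {1..k} \<rightarrow>\<^sub>E UNIV. (\<Sum>i=1..k. ms i) = m - j \<and> (\<forall>i\<in>{1..k}. nn i \<le> ms i)}
            \<subseteq> SS {1..k} (m - j)" by (auto simp: SS_def)
      show "\<forall>ms\<in>SS {1..k} (m - j) - {ms \<in> {1..k} \<rightarrow>\<^sub>E UNIV. (\<Sum>i=1..k. ms i) = m - j \<and> (\<forall>i\<in>{1..k}. nn i \<le> ms i)}.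
              int (\<Prod>i=1..k. (ms i choose nn i)) = 0"
        by (auto simp: SS_def not_le)
    qed
    also have "\<dots> = int (\<Sum>ms \<in> SS {1..k} (m-j). \<Prod>i=1..k. (ms i choose nn i))" by simp
    also have "\<dots> = int (((m - j) + k - 1) choose (n + k - 1))"
      using SS_binom[where I="{1..k}" and M="m-j" and nn=nn] assms by simp
    also have "\<dots> = int (((m + (k-1) - j)) choose (n + (k-1)))"
      using assms j by (simp add: algebra_simps)
    finally show ?thesis .
  qed
  have "(\<Sum>j=0..k-1. (-1)^j * int ((k-1) choose j) *
       (\<Sum>ms \<in> {ms \<in> {1..k} \<rightarrow>\<^sub>E UNIV.
                    (\<Sum>i=1..k. ms i) = m - j \<and> (\<forall>i\<in>{1..k}. nn i \<le> ms i)}.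
          int (\<Prod>i=1..k. (ms i choose nn i))))
     = (\<Sum>j=0..k-1. (-1::int)^j * int ((k-1) choose j) * int (((m + (k-1) - j)) choose (n + (k-1))))"
    apply (rule sum.cong[OF refl])
    subgoal for j using inner[of j] by simp
    done
  also have "\<dots> = int (m choose n)" by (rule alt_sum)
  finally show ?thesis by simp
qed

end
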